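(* For every $\mu\in[\mu_m,\mu_M]$, letting $$V^\infty_N(\mu):=\sup_{\tau\in\mathcal T(\mathbb F^B)}\mathsf E\Big[\int_0^\tau e^{-(\rho+\mu)t}(\alpha+\nu\mu)X^1_tdt+e^{-(\rho+\mu)\tau}\hat f(N,\mu)X^1_\tau\Big],$$ we have $V^\infty_N(\mu)=\max\{\beta_N(\mu),\hat f(N,\mu)\}$.
   Context: Let $(B_t)_{t\ge0}$ be a standard Brownian motion, $\mathbb F^B$ its augmented filtration and $\mathcal T(\mathbb F^B)$ the set of $\mathbb F^B$-stopping times with values in $[0,\infty]$ (terms discounted at $\tau$ are $0$ on $\{\tau=\infty\}$). Fix $\theta>0$, $\alpha\ge0$, $\sigma>0$, $\rho>0$, $\nu\in[0,1]$, $\hat\rho>0$, $0<\mu_m\le\mu_M<\infty$, $\hat\mu\in[\mu_m,\mu_M]$, and assume $\theta-\alpha-\rho-\mu_m<0$. Let $X^1_t=\exp((\theta-\alpha-\sigma^2/2)t+\sigma B_t)$. For $\mu\in[\mu_m,\mu_M]$, $\hat f(N,\mu):=(\hat\rho+\hat\mu)/(\rho+\mu)$ and $\beta_N(\mu):=(\alpha+\nu\mu)/(\rho+\mu+\alpha-\theta)$. *)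

theory Defs
  imports "HOL-Probability.Probability"
begin

definition natural_filtration :: "'a measure \<Rightarrow> (real \<Rightarrow> 'a \<Rightarrow> real) \<Rightarrow> real \<Rightarrow> 'a set set" where
  "natural_filtration M B t = sigma_sets (space M)
     {B r -` A \<inter> space M | r A. 0 \<le> r \<and> r \<le> t \<and> A \<in> sets borel}"

definition std_brownian_motion :: "'a measure \<Rightarrow> (real \<Rightarrow> 'a \<Rightarrow> real) \<Rightarrow> bool" where
  "std_brownian_motion M B \<longleftrightarrow>
     prob_space M \<and>
     (\<forall>t. B t \<in> borel_measurable M) \<and>
     (\<forall>\<omega>\<in>space M. B 0 \<omega> = 0) \<and>
     (\<forall>\<omega>\<in>space M. continuous_on {0..} (\<lambda>t. B t \<omega>)) \<and>
     (\<forall>s t. 0 \<le> s \<longrightarrow> s < t \<longrightarrow>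
        distributed M lborel (\<lambda>\<omega>. B t \<omega> - B s \<omega>) (normal_density 0 (sqrt (t - s))) \<and>
        prob_space.indep_sets M
          (\<lambda>i::bool. if i then natural_filtration M B s
                      else {(\<lambda>\<omega>. B t \<omega> - B s \<omega>) -` A \<inter> space M | A. A \<in> sets borel}) UNIV)"

definition null_subsets :: "'a measure \<Rightarrow> 'a set set" where
  "null_subsets M = {N. N \<subseteq> space M \<and> (\<exists>A\<in>sets M. N \<subseteq> A \<and> emeasure M A = 0)}"

definition augmented_filtration :: "'a measure \<Rightarrow> (real \<Rightarrow> 'a \<Rightarrow> real) \<Rightarrow> real \<Rightarrow> 'a set set" where
  "augmented_filtration M B t = sigma_sets (space M) (natural_filtration M B t \<union> null_subsets M)"

definition stopping_times_B :: "'a measure \<Rightarrow> (real \<Rightarrow> 'a \<Rightarrow> real) \<Rightarrow> ('a \<Rightarrow> ennreal) set" where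
  "stopping_times_B M B = {\<tau>. \<forall>t\<ge>0. {\<omega>\<in>space M. \<tau> \<omega> \<le> ennreal t} \<in> augmented_filtration M B t}"

definition fhat :: "real \<Rightarrow> real \<Rightarrow> real \<Rightarrow> real \<Rightarrow> real" where
  "fhat \<rho>h \<mu>h \<rho> \<mu> = (\<rho>h + \<mu>h) / (\<rho> + \<mu>)"

definition betaN :: "real \<Rightarrow> real \<Rightarrow> real \<Rightarrow> real \<Rightarrow> real \<Rightarrow> real" where
  "betaN \<alpha> \<nu> \<rho> \<theta> \<mu> = (\<alpha> + \<nu> * \<mu>) / (\<rho> + \<mu> + \<alpha> - \<theta>)"

definition reward :: "(real \<Rightarrow> 'a \<Rightarrow> real) \<Rightarrow> real \<Rightarrow> real \<Rightarrow> real
                     \<Rightarrow> ('a \<Rightarrow> ennreal) \<Rightarrow> 'a \<Rightarrow> ennreal" where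
  "reward X r a f \<tau> \<omega> =
     (\<integral>\<^sup>+ t. indicator {t. 0 \<le> t \<and> ennreal t < \<tau> \<omega>} t * ennreal (exp (- r * t) * a * X t \<omega>) \<partial>lborel)
     + (if \<tau> \<omega> = \<top> then 0 else ennreal (exp (- r * enn2real (\<tau> \<omega>)) * f * X (enn2real (\<tau> \<omega>)) \<omega>))"

end

theory Submission
  imports Defs
begin


lemma normal_mgf:
  fixes sd s :: real
  assumes sd: "sd > 0" and D: "distributed M lborel Z (normal_density 0 sd)"
  shows "(\<integral>\<^sup>+\<omega>. ennreal (exp (s * Z \<omega>)) \<partial>M) = ennreal (exp (s\<^sup>2 * sd\<^sup>2 / 2))"
proof -
  have eq: "normal_density 0 sd x * exp (s * x) = exp (s\<^sup>2 * sd\<^sup>2 / 2) * normal_density (s * sd\<^sup>2) sd x" for x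
  proof -
    have "-(x - 0)\<^sup>2/ (2 * sd\<^sup>2) + s * x = s\<^sup>2 * sd\<^sup>2 / 2 + (-(x - s * sd\<^sup>2)\<^sup>2/ (2 * sd\<^sup>2))"
      using sd by (simp add: field_simps power2_eq_square)
    then have "exp (-(x - 0)\<^sup>2/ (2 * sd\<^sup>2)) * exp (s * x) = exp (s\<^sup>2 * sd\<^sup>2 / 2) * exp (-(x - s * sd\<^sup>2)\<^sup>2/ (2 * sd\<^sup>2))"
      by (metis exp_add)
    then show ?thesis unfolding normal_density_def by simp
  qed
  have "(\<integral>\<^sup>+\<omega>. ennreal (exp (s * Z \<omega>)) \<partial>M) = (\<integral>\<^sup>+x. ennreal (normal_density 0 sd x) * ennreal (exp (s * x)) \<partial>lborel)"
    using distributed_nn_integral[OF D, of "\<lambda>x. ennreal (exp (s * x))"] by simp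
  also have "\<dots> = (\<integral>\<^sup>+x. ennreal (exp (s\<^sup>2 * sd\<^sup>2 / 2)) * ennreal (normal_density (s * sd\<^sup>2) sd x) \<partial>lborel)"
    by (intro nn_integral_cong) (simp add: eq[symmetric] ennreal_mult[symmetric])
  also have "\<dots> = ennreal (exp (s\<^sup>2 * sd\<^sup>2 / 2)) * (\<integral>\<^sup>+x. ennreal (normal_density (s * sd\<^sup>2) sd x) \<partial>lborel)"
    by (rule nn_integral_cmult) simp
  also have "(\<integral>\<^sup>+x. ennreal (normal_density (s * sd\<^sup>2) sd x) \<partial>lborel) = 1"
  proof -
    interpret P: prob_space "density lborel (normal_density (s * sd\<^sup>2) sd)" by (rule prob_space_normal_density) (rule sd)
    have "emeasure (density lborel (normal_density (s * sd\<^sup>2) sd)) UNIV = 1"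
      using P.emeasure_space_1 by simp
    then show ?thesis by (simp add: emeasure_density)
  qed
  finally show ?thesis by simp
qed



definition gens :: "'a measure \<Rightarrow> (real \<Rightarrow> 'a \<Rightarrow> real) \<Rightarrow> real \<Rightarrow> 'a set set" where
  "gens M B s = {B r -` A \<inter> space M | r A. 0 \<le> r \<and> r \<le> s \<and> A \<in> sets borel}"

locale bmctx =
  fixes M :: "'a measure" and B :: "real \<Rightarrow> 'a \<Rightarrow> real" and \<sigma> :: real
  assumes BM: "std_brownian_motion M B" and sig: "\<sigma> > 0"
begin

sublocale prob_space M using BM by (simp add: std_brownian_motion_def)

lemma Bmeas[measurable]: "B t \<in> borel_measurable M"
  using BM by (simp add: std_brownian_motion_def)

lemma B0: "\<omega> \<in> space M \<Longrightarrow> B 0 \<omega> = 0"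
  using BM by (simp add: std_brownian_motion_def)

lemma Bcont: "\<omega> \<in> space M \<Longrightarrow> continuous_on {0..} (\<lambda>t. B t \<omega>)"
  using BM by (simp add: std_brownian_motion_def)

lemma Bdist: "0 \<le> s \<Longrightarrow> s < t \<Longrightarrow>
   distributed M lborel (\<lambda>\<omega>. B t \<omega> - B s \<omega>) (normal_density 0 (sqrt (t - s)))"
  using BM by (simp add: std_brownian_motion_def)

lemma Bindep: "0 \<le> s \<Longrightarrow> s < t \<Longrightarrow>
        indep_sets (\<lambda>i::bool. if i then natural_filtration M B s
                      else {(\<lambda>\<omega>. B t \<omega> - B s \<omega>) -` A \<inter> space M | A. A \<in> sets borel}) UNIV"
  using BM by (simp add: std_brownian_motion_def)

lemma gens_Pow: "gens M B s \<subseteq> Pow (space M)"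
  by (auto simp: gens_def)

lemma NF_eq: "natural_filtration M B s = sigma_sets (space M) (gens M B s)"
  by (simp add: natural_filtration_def gens_def)

lemma NF_sets: "natural_filtration M B s \<subseteq> sets M"
proof -
  have "gens M B s \<subseteq> sets M" by (auto simp: gens_def)
  then show ?thesis unfolding NF_eq by (rule sets.sigma_sets_subset)
qed

definition FM :: "real \<Rightarrow> 'a measure" where
  "FM s = sigma (space M) (gens M B s)"

lemma sets_FM: "sets (FM s) = natural_filtration M B s"
  using gens_Pow by (simp add: FM_def NF_eq)

lemma space_FM[simp]: "space (FM s) = space M"
  using gens_Pow by (simp add: FM_def)

lemma B_FM: "0 \<le> r \<Longrightarrow> r \<le> s \<Longrightarrow> B r \<in> borel_measurable (FM s)"
proof (rule measurableI)
  fix A :: "real set" assume "0 \<le> r" "r \<le> s" "A \<in> sets borel"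
  then have "B r -` A \<inter> space M \<in> gens M B s" by (auto simp: gens_def)
  then show "B r -` A \<inter> space (FM s) \<in> sets (FM s)" using gens_Pow by (simp add: FM_def)
qed simp

lemma FM_le_M: "f \<in> borel_measurable (FM s) \<Longrightarrow> f \<in> borel_measurable M"
  using measurable_mono[of borel borel "FM s" M] NF_sets sets_FM by auto

lemma NF_Int_stable: "Int_stable (natural_filtration M B s)"
proof -
  have "sigma_algebra (space M) (natural_filtration M B s)"
    unfolding NF_eq by (rule sigma_algebra_sigma_sets[OF gens_Pow])
  then show ?thesis unfolding Int_stable_def by (auto intro: semiring_of_sets.Int sigma_algebra.axioms algebra.axioms ring_of_sets.axioms)
qed

lemma indep_prod:
  fixes g :: "'a \<Rightarrow> real" and w :: "real \<Rightarrow> real"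
  assumes st: "0 \<le> s" "s < t"
    and g: "g \<in> borel_measurable (FM s)" and gnn: "\<And>\<omega>. 0 \<le> g \<omega>"
    and w: "w \<in> borel_measurable borel" and wnn: "\<And>x. 0 \<le> w x"
  shows "(\<integral>\<^sup>+\<omega>. ennreal (g \<omega> * w (B t \<omega> - B s \<omega>)) \<partial>M)
       = (\<integral>\<^sup>+\<omega>. ennreal (g \<omega>) \<partial>M) * (\<integral>\<^sup>+\<omega>. ennreal (w (B t \<omega> - B s \<omega>)) \<partial>M)"
proof -
  define Zg where "Zg = {(\<lambda>\<omega>. B t \<omega> - B s \<omega>) -` A \<inter> space M | A. A \<in> sets borel}"
  define X where "X = (\<lambda>i::bool. if i then (\<lambda>\<omega>. ennreal (g \<omega>)) else (\<lambda>\<omega>. ennreal (w (B t \<omega> - B s \<omega>))))"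
  have g'[measurable]: "(\<lambda>\<omega>. ennreal (g \<omega>)) \<in> borel_measurable (FM s)" using g by measurable
  have w': "(\<lambda>x. ennreal (w x)) \<in> borel_measurable borel" using w by measurable
  have gM[measurable]: "g \<in> borel_measurable M" by (rule FM_le_M[OF g])
  note w[measurable]
  have Zst: "Int_stable Zg"
    unfolding Int_stable_def Zg_def
  proof (intro ballI)
    fix a b assume "a \<in> {(\<lambda>\<omega>. B t \<omega> - B s \<omega>) -` A \<inter> space M | A. A \<in> sets borel}"
       "b \<in> {(\<lambda>\<omega>. B t \<omega> - B s \<omega>) -` A \<inter> space M | A. A \<in> sets borel}"
    then obtain A1 A2 where "a = (\<lambda>\<omega>. B t \<omega> - B s \<omega>) -` A1 \<inter> space M" "A1 \<in> sets borel"
      "b = (\<lambda>\<omega>. B t \<omega> - B s \<omega>) -` A2 \<inter> space M" "A2 \<in> sets borel" by blast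
    then have "a \<inter> b = (\<lambda>\<omega>. B t \<omega> - B s \<omega>) -` (A1 \<inter> A2) \<inter> space M" "A1 \<inter> A2 \<in> sets borel" by auto
    then show "a \<inter> b \<in> {(\<lambda>\<omega>. B t \<omega> - B s \<omega>) -` A \<inter> space M | A. A \<in> sets borel}" by blast
  qed
  have ind0: "indep_sets (\<lambda>i::bool. if i then natural_filtration M B s else Zg) UNIV"
    unfolding Zg_def by (rule Bindep[OF st])
  have ind1: "indep_sets (\<lambda>i::bool. sigma_sets (space M) (if i then natural_filtration M B s else Zg)) UNIV"
    by (rule indep_sets_sigma[OF ind0]) (auto simp: NF_Int_stable Zst)
  have ind2: "indep_sets (\<lambda>i. sigma_sets (space M) {X i -` A \<inter> space M | A. A \<in> sets borel}) UNIV"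
  proof (rule indep_sets_mono_sets[OF ind1])
    fix i :: bool assume "i \<in> UNIV"
    show "sigma_sets (space M) {X i -` A \<inter> space M | A. A \<in> sets borel}
          \<subseteq> sigma_sets (space M) (if i then natural_filtration M B s else Zg)"
    proof (rule sigma_sets_mono')
      show "{X i -` A \<inter> space M | A. A \<in> sets borel} \<subseteq> (if i then natural_filtration M B s else Zg)"
      proof (cases i)
        case True
        then show ?thesis using measurable_sets[OF g'] sets_FM by (auto simp: X_def)
      next
        case False
        have "X i -` A \<inter> space M \<in> Zg" if "A \<in> sets borel" for A
        proof -
          have "(\<lambda>x. ennreal (w x)) -` A \<inter> space borel \<in> sets borel" using measurable_sets[OF w' that] .
          then have "(\<lambda>x. ennreal (w x)) -` A \<in> sets borel" by simp
          moreover have "X i -` A \<inter> space M = (\<lambda>\<omega>. B t \<omega> - B s \<omega>) -` ((\<lambda>x. ennreal (w x)) -` A) \<inter> space M"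
            using False by (auto simp: X_def)
          ultimately show ?thesis unfolding Zg_def by blast
        qed
        then show ?thesis using False by auto
      qed
    qed
  qed
  have iv: "indep_vars (\<lambda>_. borel) X UNIV"
    unfolding indep_vars_def using ind2 by (auto simp: X_def)
  have "(\<integral>\<^sup>+\<omega>. (\<Prod>i\<in>UNIV. X i \<omega>) \<partial>M) = (\<Prod>i\<in>UNIV. \<integral>\<^sup>+\<omega>. X i \<omega> \<partial>M)"
    using indep_vars_nn_integral[of UNIV X] iv by auto
  then show ?thesis using gnn wnn by (simp add: X_def UNIV_bool mult.commute ennreal_mult)
qed

end


context bmctx begin

definition Y :: "real \<Rightarrow> real \<Rightarrow> 'a \<Rightarrow> real" where
  "Y d t \<omega> = exp (-(d + \<sigma>\<^sup>2/2) * t + \<sigma> * B t \<omega>)"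

lemma Y_pos: "0 < Y d t \<omega>" by (simp add: Y_def)

lemma Y_meas[measurable]: "Y d t \<in> borel_measurable M"
  unfolding Y_def by measurable

lemma Y_FM: "0 \<le> t \<Longrightarrow> t \<le> s \<Longrightarrow> Y d t \<in> borel_measurable (FM s)"
  unfolding Y_def using B_FM[of t s] by measurable

lemma aug_repr:
  assumes "A \<in> augmented_filtration M B s"
  shows "\<exists>A'\<in>natural_filtration M B s. \<exists>N\<in>null_sets M. (A - A') \<union> (A' - A) \<subseteq> N"
  using assms unfolding augmented_filtration_def
proof (induction rule: sigma_sets.induct)
  case (Basic a)
  then show ?case
  proof
    assume "a \<in> natural_filtration M B s"
    then show ?thesis by (intro bexI[of _ a] bexI[of _ "{}"]) auto
  next
    assume "a \<in> null_subsets M"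
    then obtain C where C: "C \<in> sets M" "a \<subseteq> C" "emeasure M C = 0"
      by (auto simp: null_subsets_def)
    have "{} \<in> natural_filtration M B s" unfolding NF_eq by (rule sigma_sets.Empty)
    moreover have "C \<in> null_sets M" using C by auto
    ultimately show ?thesis using C by (intro bexI[of _ "{}"] bexI[of _ C]) auto
  qed
next
  case Empty
  have "{} \<in> natural_filtration M B s" unfolding NF_eq by (rule sigma_sets.Empty)
  then show ?case by (intro bexI[of _ "{}"] bexI[of _ "{}"]) auto
next
  case (Compl a)
  then obtain a' N where a': "a' \<in> natural_filtration M B s" "N \<in> null_sets M" "(a - a') \<union> (a' - a) \<subseteq> N"
    by blast
  have "space M - a' \<in> natural_filtration M B s" using a'(1) unfolding NF_eq by (rule sigma_sets.Compl)
  then show ?case using a' by (intro bexI[of _ "space M - a'"] bexI[of _ N]) auto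
next
  case (Union a)
  then have "\<forall>i. \<exists>p. fst p \<in> natural_filtration M B s \<and> snd p \<in> null_sets M \<and> (a i - fst p) \<union> (fst p - a i) \<subseteq> snd p"
    by (metis (no_types, lifting) fst_conv snd_conv)
  then obtain p where p: "\<And>i. fst (p i) \<in> natural_filtration M B s" "\<And>i. snd (p i) \<in> null_sets M"
    "\<And>i. (a i - fst (p i)) \<union> (fst (p i) - a i) \<subseteq> snd (p i)"
    by metis
  have "(\<Union>i. fst (p i)) \<in> natural_filtration M B s" using p(1) unfolding NF_eq by (rule sigma_sets.Union)
  moreover have "(\<Union>i. snd (p i)) \<in> null_sets M" using p(2) by (rule null_sets_UN)
  moreover have "((\<Union>i. a i) - (\<Union>i. fst (p i))) \<union> ((\<Union>i. fst (p i)) - (\<Union>i. a i)) \<subseteq> (\<Union>i. snd (p i))"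
    using p(3) by blast
  ultimately show ?case by blast
qed

lemma key_M:
  assumes s: "0 \<le> s" "s \<le> u" and A': "A' \<in> natural_filtration M B s"
  shows "(\<integral>\<^sup>+\<omega>. indicator A' \<omega> * ennreal (Y d u \<omega>) \<partial>M)
       = (\<integral>\<^sup>+\<omega>. indicator A' \<omega> * ennreal (Y d s \<omega>) \<partial>M) * ennreal (exp (-d * (u - s)))"
proof (cases "s = u")
  case True then show ?thesis by simp
next
  case False
  then have su: "s < u" using s by simp
  define g where "g \<omega> = indicator A' \<omega> * Y d s \<omega>" for \<omega>
  define c where "c = -(d + \<sigma>\<^sup>2/2) * (u - s)"
  define w where "w z = exp (c + \<sigma> * z)" for z
  have A'F: "A' \<in> sets (FM s)" using A' sets_FM by simp
  have gF: "g \<in> borel_measurable (FM s)"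
    unfolding g_def using Y_FM[of s s d] s A'F by measurable
  have gnn: "0 \<le> g \<omega>" for \<omega> by (simp add: g_def Y_pos less_imp_le)
  have wm: "w \<in> borel_measurable borel" unfolding w_def by measurable
  have eqY: "Y d u \<omega> = Y d s \<omega> * w (B u \<omega> - B s \<omega>)" for \<omega>
  proof -
    have "-(d + \<sigma>\<^sup>2/2) * u + \<sigma> * B u \<omega> = (-(d + \<sigma>\<^sup>2/2) * s + \<sigma> * B s \<omega>) + (c + \<sigma> * (B u \<omega> - B s \<omega>))"
      by (simp add: c_def field_simps)
    then show ?thesis by (simp add: Y_def w_def exp_add[symmetric])
  qed
  have "(\<integral>\<^sup>+\<omega>. indicator A' \<omega> * ennreal (Y d u \<omega>) \<partial>M) = (\<integral>\<^sup>+\<omega>. ennreal (g \<omega> * w (B u \<omega> - B s \<omega>)) \<partial>M)"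
    by (intro nn_integral_cong) (simp add: g_def eqY indicator_def)
  also have "\<dots> = (\<integral>\<^sup>+\<omega>. ennreal (g \<omega>) \<partial>M) * (\<integral>\<^sup>+\<omega>. ennreal (w (B u \<omega> - B s \<omega>)) \<partial>M)"
    by (rule indep_prod[OF s(1) su gF gnn wm]) (simp add: w_def)
  also have "(\<integral>\<^sup>+\<omega>. ennreal (g \<omega>) \<partial>M) = (\<integral>\<^sup>+\<omega>. indicator A' \<omega> * ennreal (Y d s \<omega>) \<partial>M)"
    by (intro nn_integral_cong) (simp add: g_def indicator_def)
  also have "(\<integral>\<^sup>+\<omega>. ennreal (w (B u \<omega> - B s \<omega>)) \<partial>M) = ennreal (exp (-d * (u - s)))"
  proof -
    have sd: "sqrt (u - s) > 0" using su by simp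
    have "(\<integral>\<^sup>+\<omega>. ennreal (w (B u \<omega> - B s \<omega>)) \<partial>M)
        = (\<integral>\<^sup>+\<omega>. ennreal (exp c) * ennreal (exp (\<sigma> * (B u \<omega> - B s \<omega>))) \<partial>M)"
      by (intro nn_integral_cong) (simp add: w_def exp_add ennreal_mult)
    also have "\<dots> = ennreal (exp c) * (\<integral>\<^sup>+\<omega>. ennreal (exp (\<sigma> * (B u \<omega> - B s \<omega>))) \<partial>M)"
      by (rule nn_integral_cmult) measurable
    also have "(\<integral>\<^sup>+\<omega>. ennreal (exp (\<sigma> * (B u \<omega> - B s \<omega>))) \<partial>M) = ennreal (exp (\<sigma>\<^sup>2 * (sqrt (u - s))\<^sup>2 / 2))"
      by (rule normal_mgf[OF sd Bdist[OF s(1) su]])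
    also have "ennreal (exp c) * ennreal (exp (\<sigma>\<^sup>2 * (sqrt (u - s))\<^sup>2 / 2)) = ennreal (exp (-d * (u - s)))"
    proof -
      have "c + \<sigma>\<^sup>2 * (sqrt (u - s))\<^sup>2 / 2 = -d * (u - s)" using su by (simp add: c_def algebra_simps)
      then show ?thesis by (simp add: ennreal_mult[symmetric] exp_add[symmetric])
    qed
    finally show ?thesis .
  qed
  finally show ?thesis .
qed

lemma key:
  assumes s: "0 \<le> s" "s \<le> u" and A: "A \<in> augmented_filtration M B s"
  shows "(\<integral>\<^sup>+\<omega>. indicator A \<omega> * ennreal (Y d u \<omega>) \<partial>completion M)
       = (\<integral>\<^sup>+\<omega>. indicator A \<omega> * ennreal (Y d s \<omega>) \<partial>completion M) * ennreal (exp (-d * (u - s)))"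
proof -
  obtain A' N where A': "A' \<in> natural_filtration M B s" "N \<in> null_sets M" "(A - A') \<union> (A' - A) \<subseteq> N"
    using aug_repr[OF A] by blast
  have eq: "(\<integral>\<^sup>+\<omega>. indicator A \<omega> * ennreal (Y d v \<omega>) \<partial>completion M) = (\<integral>\<^sup>+\<omega>. indicator A' \<omega> * ennreal (Y d v \<omega>) \<partial>M)" for v
  proof -
    have "(\<integral>\<^sup>+\<omega>. indicator A \<omega> * ennreal (Y d v \<omega>) \<partial>completion M) = (\<integral>\<^sup>+\<omega>. indicator A \<omega> * ennreal (Y d v \<omega>) \<partial>M)"
      by (rule nn_integral_completion)
    also have "\<dots> = (\<integral>\<^sup>+\<omega>. indicator A' \<omega> * ennreal (Y d v \<omega>) \<partial>M)"
    proof (rule nn_integral_cong_AE)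
      show "AE x in M. indicator A x * ennreal (Y d v x) = indicator A' x * ennreal (Y d v x)"
        using AE_not_in[OF A'(2)] by eventually_elim (use A'(3) in \<open>auto simp: indicator_def\<close>)
    qed
    finally show ?thesis .
  qed
  show ?thesis unfolding eq by (rule key_M[OF s A'(1)])
qed

end


context bmctx begin

lemma Y_tendsto:
  assumes \<omega>: "\<omega> \<in> space M" and t: "0 \<le> t" and q: "q \<longlonglongrightarrow> t" and qnn: "\<And>n. 0 \<le> q n"
  shows "(\<lambda>n. Y d (q n) \<omega>) \<longlonglongrightarrow> Y d t \<omega>"
proof -
  have "(\<lambda>n. B (q n) \<omega>) \<longlonglongrightarrow> B t \<omega>"
    by (rule continuous_on_tendsto_compose[OF Bcont[OF \<omega>] q]) (use t qnn in auto)
  then show ?thesis unfolding Y_def by (intro tendsto_intros q)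
qed

lemma floor_tendsto:
  fixes t :: real
  shows "(\<lambda>n. real_of_int \<lfloor>real (Suc n) * t\<rfloor> / real (Suc n)) \<longlonglongrightarrow> t"
proof (rule tendsto_sandwich[where f="\<lambda>n. t - 1 / real (Suc n)" and h="\<lambda>n. t"])
  show "\<forall>\<^sub>F n in sequentially. t - 1 / real (Suc n) \<le> real_of_int \<lfloor>real (Suc n) * t\<rfloor> / real (Suc n)"
  proof (intro always_eventually allI)
    fix n
    have le: "real (Suc n) * t - 1 \<le> real_of_int \<lfloor>real (Suc n) * t\<rfloor>" by linarith
    have "t - 1 / real (Suc n) = (real (Suc n) * t - 1) / real (Suc n)" by (simp add: field_simps)
    also have "\<dots> \<le> real_of_int \<lfloor>real (Suc n) * t\<rfloor> / real (Suc n)"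
      by (rule divide_right_mono[OF le]) simp
    finally show "t - 1 / real (Suc n) \<le> real_of_int \<lfloor>real (Suc n) * t\<rfloor> / real (Suc n)" .
  qed
  show "\<forall>\<^sub>F n in sequentially. real_of_int \<lfloor>real (Suc n) * t\<rfloor> / real (Suc n) \<le> t"
  proof (intro always_eventually allI)
    fix n
    have le: "real_of_int \<lfloor>real (Suc n) * t\<rfloor> \<le> real (Suc n) * t" by linarith
    have "real_of_int \<lfloor>real (Suc n) * t\<rfloor> / real (Suc n) \<le> real (Suc n) * t / real (Suc n)"
      by (rule divide_right_mono[OF le]) simp
    then show "real_of_int \<lfloor>real (Suc n) * t\<rfloor> / real (Suc n) \<le> t" by simp
  qed
  have "(\<lambda>n. 1 / real (Suc n)) \<longlonglongrightarrow> 0" by (rule LIMSEQ_inverse_real_of_nat[unfolded inverse_eq_divide])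
  then show "(\<lambda>n. t - 1 / real (Suc n)) \<longlonglongrightarrow> t" by (auto intro: tendsto_eq_intros)
qed simp

definition Yp :: "real \<Rightarrow> real \<Rightarrow> 'a \<Rightarrow> real" where
  "Yp d t \<omega> = (if 0 \<le> t then Y d t \<omega> else 0)"

lemma Yp_nn: "0 \<le> Yp d t \<omega>" by (simp add: Yp_def Y_pos less_imp_le)

lemma Yp_joint: "(\<lambda>x. Yp d (snd x) (fst x)) \<in> borel_measurable (completion M \<Otimes>\<^sub>M lborel)"
proof (rule borel_measurable_LIMSEQ_real)
  define f where "f n x = (if 0 \<le> snd x then Y d (real_of_int \<lfloor>real (Suc n) * snd x\<rfloor> / real (Suc n)) (fst x) else 0)"
    for n :: nat and x :: "'a \<times> real"
  show "f n \<in> borel_measurable (completion M \<Otimes>\<^sub>M lborel)" for n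
  proof -
    define F where "F k x = (if 0 \<le> snd x then Y d (real_of_int k / real (Suc n)) (fst x) else 0)"
      for k :: int and x :: "'a \<times> real"
    have YC: "Y d c \<in> borel_measurable (completion M)" for c by (rule measurable_completion) simp
    have "(\<lambda>x. F k x) \<in> borel_measurable (completion M \<Otimes>\<^sub>M lborel)" for k
      unfolding F_def using YC by measurable
    moreover have "(\<lambda>x. \<lfloor>real (Suc n) * snd x\<rfloor>) \<in> measurable (completion M \<Otimes>\<^sub>M lborel) (count_space UNIV)"
      by measurable
    ultimately have "(\<lambda>x. F (\<lfloor>real (Suc n) * snd x\<rfloor>) x) \<in> borel_measurable (completion M \<Otimes>\<^sub>M lborel)"
      by (rule measurable_compose_countable)
    moreover have "f n = (\<lambda>x. F (\<lfloor>real (Suc n) * snd x\<rfloor>) x)" by (simp add: F_def f_def fun_eq_iff)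
    ultimately show ?thesis by simp
  qed
  fix x :: "'a \<times> real" assume x: "x \<in> space (completion M \<Otimes>\<^sub>M lborel)"
  then have \<omega>: "fst x \<in> space M" by (auto simp: space_pair_measure)
  show "(\<lambda>n. f n x) \<longlonglongrightarrow> Yp d (snd x) (fst x)"
  proof (cases "0 \<le> snd x")
    case True
    have "(\<lambda>n. Y d (real_of_int \<lfloor>real (Suc n) * snd x\<rfloor> / real (Suc n)) (fst x)) \<longlonglongrightarrow> Y d (snd x) (fst x)"
      by (rule Y_tendsto[OF \<omega> True floor_tendsto]) (use True in auto)
    then show ?thesis using True by (simp add: f_def Yp_def)
  next
    case False
    then show ?thesis by (simp add: f_def Yp_def)
  qed
qed

end


lemma exp_interval_integral:
  fixes d s h :: real
  assumes d: "d > 0" and h: "h \<ge> 0"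
  shows "(\<integral>\<^sup>+t. indicator {s..s+h} t * ennreal (exp (-d * (t - s))) \<partial>lborel) = ennreal ((1 - exp (-d * h)) / d)"
proof -
  have "((\<lambda>t. exp (-d * (t - s))) has_integral ((- exp (-d * ((s+h) - s)) / d) - (- exp (-d * (s - s)) / d))) {s..s+h}"
  proof (rule fundamental_theorem_of_calculus)
    show "s \<le> s + h" using h by simp
    fix x assume "x \<in> {s..s+h}"
    have "((\<lambda>t. - exp (-d * (t - s)) / d) has_real_derivative (- (exp (-d * (x - s)) * (-d * 1)) / d)) (at x within {s..s+h})"
      by (intro derivative_eq_intros) (use d in auto)
    then show "((\<lambda>t. - exp (-d * (t - s)) / d) has_vector_derivative exp (-d * (x - s))) (at x within {s..s+h})"
      using d by (simp add: has_real_derivative_iff_has_vector_derivative[symmetric])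
  qed
  then have I: "((\<lambda>t. exp (-d * (t - s))) has_integral ((1 - exp (-d * h)) / d)) {s..s+h}"
    by (simp add: diff_divide_distrib)
  have "(\<integral>\<^sup>+t. indicator {s..s+h} t * ennreal (exp (-d * (t - s))) \<partial>lborel)
      = (\<integral>\<^sup>+t. ennreal (exp (-d * (t - s))) * indicator {s..s+h} t \<partial>lborel)"
    by (simp add: mult.commute)
  also have "\<dots> = ennreal ((1 - exp (-d * h)) / d)"
    by (rule nn_integral_has_integral_lebesgue'[OF _ I]) simp
  finally show ?thesis .
qed

context bmctx begin

lemma prob_completion: "prob_space (completion M)"
  by (rule prob_spaceI) (simp add: emeasure_space_1)

lemma sf_completion: "sigma_finite_measure (completion M)"
proof -
  interpret C: prob_space "completion M" by (rule prob_completion)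
  show ?thesis by unfold_locales
qed

lemma aug_sets: "augmented_filtration M B s \<subseteq> sets (completion M)"
proof -
  have "natural_filtration M B s \<union> null_subsets M \<subseteq> sets (completion M)"
  proof
    fix a assume "a \<in> natural_filtration M B s \<union> null_subsets M"
    then show "a \<in> sets (completion M)"
    proof
      assume "a \<in> natural_filtration M B s" then show ?thesis using NF_sets by auto
    next
      assume "a \<in> null_subsets M"
      then obtain C where C: "C \<in> sets M" "a \<subseteq> C" "emeasure M C = 0" "a \<subseteq> space M"
        by (auto simp: null_subsets_def)
      then have "C \<in> null_sets M" by auto
      then show ?thesis using C by (intro sets_completionI_sub) auto
    qed
  qed
  moreover have sa: "sigma_algebra (space M) (sets (completion M))"
    using sets.sigma_algebra_axioms[of "completion M"] by simp
  ultimately show ?thesis unfolding augmented_filtration_def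
    by (intro sigma_algebra.sigma_sets_subset[OF sa])
qed

lemma Yp_sec: "\<omega> \<in> space M \<Longrightarrow> (\<lambda>t. Yp d t \<omega>) \<in> borel_measurable borel"
  using measurable_Pair2[OF Yp_joint[of d], of \<omega>] by simp

lemma int_step:
  assumes d: "d > 0" and s: "0 \<le> s" and h: "0 \<le> h" and A: "A \<in> augmented_filtration M B s"
  shows "ennreal d * (\<integral>\<^sup>+\<omega>. indicator A \<omega> * (\<integral>\<^sup>+t. indicator {s..s+h} t * ennreal (Yp d t \<omega>) \<partial>lborel) \<partial>completion M)
         + (\<integral>\<^sup>+\<omega>. indicator A \<omega> * ennreal (Y d (s+h) \<omega>) \<partial>completion M)
       = (\<integral>\<^sup>+\<omega>. indicator A \<omega> * ennreal (Y d s \<omega>) \<partial>completion M)"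
proof -
  interpret P: pair_sigma_finite "completion M" lborel
    using sf_completion by (simp add: pair_sigma_finite_def lborel.sigma_finite_measure_axioms)
  define K where "K = (\<integral>\<^sup>+\<omega>. indicator A \<omega> * ennreal (Y d s \<omega>) \<partial>completion M)"
  have AM: "A \<in> sets (completion M)" using A aug_sets by auto
  have J[measurable]: "(\<lambda>x. Yp d (snd x) (fst x)) \<in> borel_measurable (completion M \<Otimes>\<^sub>M lborel)"
    by (rule Yp_joint)
  have "(\<integral>\<^sup>+\<omega>. indicator A \<omega> * (\<integral>\<^sup>+t. indicator {s..s+h} t * ennreal (Yp d t \<omega>) \<partial>lborel) \<partial>completion M)
      = (\<integral>\<^sup>+\<omega>. (\<integral>\<^sup>+t. indicator A \<omega> * (indicator {s..s+h} t * ennreal (Yp d t \<omega>)) \<partial>lborel) \<partial>completion M)"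
  proof (rule nn_integral_cong)
    fix \<omega> assume "\<omega> \<in> space (completion M)"
    then have [measurable]: "(\<lambda>t. Yp d t \<omega>) \<in> borel_measurable borel" using Yp_sec by simp
    then show "indicator A \<omega> * (\<integral>\<^sup>+t. indicator {s..s+h} t * ennreal (Yp d t \<omega>) \<partial>lborel)
       = (\<integral>\<^sup>+t. indicator A \<omega> * (indicator {s..s+h} t * ennreal (Yp d t \<omega>)) \<partial>lborel)"
      by (intro nn_integral_cmult[symmetric]) measurable
  qed
  also have "\<dots> = (\<integral>\<^sup>+t. (\<integral>\<^sup>+\<omega>. indicator A \<omega> * (indicator {s..s+h} t * ennreal (Yp d t \<omega>)) \<partial>completion M) \<partial>lborel)"
    by (rule P.Fubini'[symmetric]) (use AM in measurable)
  also have "\<dots> = (\<integral>\<^sup>+t. indicator {s..s+h} t * ennreal (exp (-d * (t - s))) * K \<partial>lborel)"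
  proof (rule nn_integral_cong)
    fix t :: real
    show "(\<integral>\<^sup>+\<omega>. indicator A \<omega> * (indicator {s..s+h} t * ennreal (Yp d t \<omega>)) \<partial>completion M)
        = indicator {s..s+h} t * ennreal (exp (-d * (t - s))) * K"
    proof (cases "t \<in> {s..s+h}")
      case True
      then have "(\<integral>\<^sup>+\<omega>. indicator A \<omega> * (indicator {s..s+h} t * ennreal (Yp d t \<omega>)) \<partial>completion M)
          = (\<integral>\<^sup>+\<omega>. indicator A \<omega> * ennreal (Y d t \<omega>) \<partial>completion M)"
        using s by (intro nn_integral_cong) (simp add: Yp_def)
      also have "\<dots> = K * ennreal (exp (-d * (t - s)))"
        unfolding K_def by (rule key) (use True s A in auto)
      finally show ?thesis using True by (simp add: mult.commute)
    qed simp
  qed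
  also have "\<dots> = (\<integral>\<^sup>+t. indicator {s..s+h} t * ennreal (exp (-d * (t - s))) \<partial>lborel) * K"
    by (rule nn_integral_multc) measurable
  also have "\<dots> = ennreal ((1 - exp (-d * h)) / d) * K"
    by (simp only: exp_interval_integral[OF d h])
  finally have I: "(\<integral>\<^sup>+\<omega>. indicator A \<omega> * (\<integral>\<^sup>+t. indicator {s..s+h} t * ennreal (Yp d t \<omega>) \<partial>lborel) \<partial>completion M)
     = ennreal ((1 - exp (-d * h)) / d) * K" .
  have I2: "(\<integral>\<^sup>+\<omega>. indicator A \<omega> * ennreal (Y d (s+h) \<omega>) \<partial>completion M) = K * ennreal (exp (-d * h))"
    unfolding K_def using key[OF s _ A, of "s+h" d] h by simp
  have e1: "exp (-d * h) \<le> 1" using d h by simp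
  have x0: "0 \<le> (1 - exp (-d * h)) / d" using d e1 by simp
  have "ennreal d * (ennreal ((1 - exp (-d * h)) / d) * K) + K * ennreal (exp (-d * h))
      = K * (ennreal d * ennreal ((1 - exp (-d * h)) / d) + ennreal (exp (-d * h)))"
    by (simp add: distrib_left mult_ac)
  also have "ennreal d * ennreal ((1 - exp (-d * h)) / d) = ennreal (d * ((1 - exp (-d * h)) / d))"
    using d x0 by (subst ennreal_mult) auto
  also have "ennreal (d * ((1 - exp (-d * h)) / d)) + ennreal (exp (-d * h)) = ennreal (d * ((1 - exp (-d * h)) / d) + exp (-d * h))"
    using d x0 h by (subst ennreal_plus) auto
  also have "d * ((1 - exp (-d * h)) / d) + exp (-d * h) = 1" using d by simp
  finally show ?thesis unfolding I I2 K_def by simp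
qed

end


context bmctx begin

lemma aug_Pow: "natural_filtration M B s \<union> null_subsets M \<subseteq> Pow (space M)"
  using sigma_sets_into_sp[OF gens_Pow] by (auto simp: NF_eq null_subsets_def)

lemma aug_sa: "sigma_algebra (space M) (augmented_filtration M B s)"
  unfolding augmented_filtration_def by (rule sigma_algebra_sigma_sets[OF aug_Pow])

lemma NF_mono: "s \<le> u \<Longrightarrow> natural_filtration M B s \<subseteq> natural_filtration M B u"
  unfolding NF_eq gens_def by (rule sigma_sets_mono') (fastforce intro: order_trans)

lemma aug_mono: "s \<le> u \<Longrightarrow> augmented_filtration M B s \<subseteq> augmented_filtration M B u"
  unfolding augmented_filtration_def using NF_mono by (intro sigma_sets_mono') blast

lemma aug_space: "space M \<in> augmented_filtration M B s"
proof -
  interpret SA: sigma_algebra "space M" "augmented_filtration M B s" by (rule aug_sa)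
  show ?thesis by (rule SA.top)
qed

lemma Y0: "\<omega> \<in> space M \<Longrightarrow> Y d 0 \<omega> = 1"
  by (simp add: Y_def B0)

lemma EY0: "(\<integral>\<^sup>+\<omega>. ennreal (Y d 0 \<omega>) \<partial>completion M) = 1"
proof -
  have "(\<integral>\<^sup>+\<omega>. ennreal (Y d 0 \<omega>) \<partial>completion M) = (\<integral>\<^sup>+\<omega>. 1 \<partial>completion M)"
    by (intro nn_integral_cong) (simp add: Y0)
  also have "\<dots> = 1"
  proof -
    interpret C: prob_space "completion M" by (rule prob_completion)
    show ?thesis using C.emeasure_space_1 by simp
  qed
  finally show ?thesis .
qed

lemma YC[measurable]: "Y d t \<in> borel_measurable (completion M)"
  by (rule measurable_completion) simp

context
  fixes \<tau> :: "'a \<Rightarrow> ennreal" and h d :: real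
  assumes tau: "\<tau> \<in> stopping_times_B M B" and h: "h > 0" and d: "d > 0"
begin

definition "D j = {\<omega> \<in> space M. \<tau> \<omega> \<le> ennreal (real j * h)}"
definition "E j = space M - D j"
definition "Iw j \<omega> = (\<integral>\<^sup>+t. indicator {real j * h .. real j * h + h} t * ennreal (Yp d t \<omega>) \<partial>lborel)"
definition "T0 = (\<integral>\<^sup>+\<omega>. indicator (D 0) \<omega> * ennreal (Y d 0 \<omega>) \<partial>completion M)"
definition "q j = (\<integral>\<^sup>+\<omega>. indicator (E j) \<omega> * ennreal (Y d (real j * h) \<omega>) \<partial>completion M)"
definition "Tm j = (\<integral>\<^sup>+\<omega>. indicator (E j \<inter> D (Suc j)) \<omega> * ennreal (Y d (real (Suc j) * h) \<omega>) \<partial>completion M)"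
definition "J j = (\<integral>\<^sup>+\<omega>. indicator (E j) \<omega> * Iw j \<omega> \<partial>completion M)"
definition "R \<omega> = indicator (D 0) \<omega> * ennreal (Y d 0 \<omega>) +
   (\<Sum>j. ennreal d * (indicator (E j) \<omega> * Iw j \<omega>) + indicator (E j \<inter> D (Suc j)) \<omega> * ennreal (Y d (real (Suc j) * h) \<omega>))"

lemma D_aug: "D j \<in> augmented_filtration M B (real j * h)"
  using tau h unfolding D_def stopping_times_B_def by auto

lemma E_aug: "E j \<in> augmented_filtration M B (real j * h)"
proof -
  interpret SA: sigma_algebra "space M" "augmented_filtration M B (real j * h)" by (rule aug_sa)
  show ?thesis unfolding E_def using D_aug by (rule SA.compl_sets)
qed

lemma S_aug: "E j \<inter> D (Suc j) \<in> augmented_filtration M B (real (Suc j) * h)"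
proof -
  interpret SA: sigma_algebra "space M" "augmented_filtration M B (real (Suc j) * h)" by (rule aug_sa)
  have "E j \<in> augmented_filtration M B (real (Suc j) * h)"
    using E_aug aug_mono[of "real j * h" "real (Suc j) * h"] h by auto
  then show ?thesis using D_aug by (intro SA.Int)
qed

lemma sets_C[measurable]: "D j \<in> sets (completion M)" "E j \<in> sets (completion M)" "E j \<inter> D (Suc j) \<in> sets (completion M)"
  using D_aug E_aug S_aug aug_sets by blast+

lemma Iw_meas[measurable]: "Iw j \<in> borel_measurable (completion M)"
proof -
  have "(\<lambda>x. indicator {real j * h .. real j * h + h} (snd x) * ennreal (Yp d (snd x) (fst x)))
        \<in> borel_measurable (completion M \<Otimes>\<^sub>M lborel)"
    using Yp_joint[of d] by measurable
  then have "(\<lambda>\<omega>. \<integral>\<^sup>+t. indicator {real j * h .. real j * h + h} t * ennreal (Yp d t \<omega>) \<partial>lborel)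
        \<in> borel_measurable (completion M)"
    by (intro lborel.borel_measurable_nn_integral) (simp add: split_beta')
  then show ?thesis by (simp add: Iw_def[abs_def])
qed


lemma recur: "ennreal d * J j + Tm j + q (Suc j) = q j"
proof -
  have st: "ennreal d * J j + (\<integral>\<^sup>+\<omega>. indicator (E j) \<omega> * ennreal (Y d (real j * h + h) \<omega>) \<partial>completion M) = q j"
    unfolding J_def q_def Iw_def using int_step[OF d _ less_imp_le[OF h] E_aug[of j]] h by simp
  have sub: "E (Suc j) \<subseteq> E j"
  proof
    fix \<omega> assume "\<omega> \<in> E (Suc j)"
    then have "\<omega> \<in> space M" "\<not> \<tau> \<omega> \<le> ennreal (real (Suc j) * h)" by (auto simp: E_def D_def)
    moreover have "ennreal (real j * h) \<le> ennreal (real (Suc j) * h)" using h by (intro ennreal_leI) simp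
    ultimately show "\<omega> \<in> E j" by (auto simp: E_def D_def dest: order_trans)
  qed
  have "(\<integral>\<^sup>+\<omega>. indicator (E j) \<omega> * ennreal (Y d (real j * h + h) \<omega>) \<partial>completion M)
      = (\<integral>\<^sup>+\<omega>. indicator (E j \<inter> D (Suc j)) \<omega> * ennreal (Y d (real (Suc j) * h) \<omega>)
              + indicator (E (Suc j)) \<omega> * ennreal (Y d (real (Suc j) * h) \<omega>) \<partial>completion M)"
  proof (rule nn_integral_cong)
    fix \<omega> assume "\<omega> \<in> space (completion M)"
    have e: "real j * h + h = real (Suc j) * h" by (simp add: algebra_simps)
    show "indicator (E j) \<omega> * ennreal (Y d (real j * h + h) \<omega>)
      = indicator (E j \<inter> D (Suc j)) \<omega> * ennreal (Y d (real (Suc j) * h) \<omega>)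
              + indicator (E (Suc j)) \<omega> * ennreal (Y d (real (Suc j) * h) \<omega>)"
      unfolding e using sub \<open>\<omega> \<in> space (completion M)\<close>
      by (auto simp: indicator_def E_def D_def)
  qed
  also have "\<dots> = Tm j + q (Suc j)"
    unfolding Tm_def q_def using sets_C by (intro nn_integral_add) measurable
  finally show ?thesis using st by (simp add: add.assoc)
qed

lemma telescope: "T0 + (\<Sum>j<N. ennreal d * J j + Tm j) + q N = 1"
proof (induction N)
  case 0
  have "T0 + q 0 = (\<integral>\<^sup>+\<omega>. indicator (D 0) \<omega> * ennreal (Y d 0 \<omega>) + indicator (E 0) \<omega> * ennreal (Y d 0 \<omega>) \<partial>completion M)"
    unfolding T0_def q_def
  proof (subst nn_integral_add)
    show "(\<lambda>\<omega>. indicator (D 0) \<omega> * ennreal (Y d 0 \<omega>)) \<in> borel_measurable (completion M)"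
      using sets_C(1)[of 0] by measurable
    show "(\<lambda>\<omega>. indicator (E 0) \<omega> * ennreal (Y d 0 \<omega>)) \<in> borel_measurable (completion M)"
      using sets_C(2)[of 0] by measurable
  qed simp
  also have "\<dots> = (\<integral>\<^sup>+\<omega>. ennreal (Y d 0 \<omega>) \<partial>completion M)"
    by (intro nn_integral_cong) (auto simp: indicator_def E_def)
  also have "\<dots> = 1" by (rule EY0)
  finally show ?case by simp
next
  case (Suc N)
  have "T0 + (\<Sum>j<Suc N. ennreal d * J j + Tm j) + q (Suc N)
      = T0 + (\<Sum>j<N. ennreal d * J j + Tm j) + (ennreal d * J N + Tm N + q (Suc N))"
    by (simp add: add_ac)
  also have "\<dots> = 1" using Suc.IH recur[of N] by simp
  finally show ?case .
qed

lemma mE[measurable]: "(\<lambda>\<omega>. ennreal d * (indicator (E j) \<omega> * Iw j \<omega>)) \<in> borel_measurable (completion M)"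
  using sets_C(2)[of j] by measurable

lemma mS[measurable]: "(\<lambda>\<omega>. indicator (E j \<inter> D (Suc j)) \<omega> * ennreal (Y d (real (Suc j) * h) \<omega>)) \<in> borel_measurable (completion M)"
  using sets_C(3)[of j] by measurable

lemma mT[measurable]: "(\<lambda>\<omega>. indicator (D 0) \<omega> * ennreal (Y d 0 \<omega>)) \<in> borel_measurable (completion M)"
  using sets_C(1)[of 0] by measurable

lemma mJ: "(\<lambda>\<omega>. ennreal d * (indicator (E j) \<omega> * Iw j \<omega>) + indicator (E j \<inter> D (Suc j)) \<omega> * ennreal (Y d (real (Suc j) * h) \<omega>)) \<in> borel_measurable (completion M)"
  using mE mS by (rule borel_measurable_add)

lemma ER_le: "(\<integral>\<^sup>+\<omega>. R \<omega> \<partial>completion M) \<le> 1"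
proof -
  have "(\<integral>\<^sup>+\<omega>. R \<omega> \<partial>completion M) = T0 + (\<Sum>j. ennreal d * J j + Tm j)"
  proof -
    have ms: "(\<lambda>\<omega>. \<Sum>j. ennreal d * (indicator (E j) \<omega> * Iw j \<omega>) + indicator (E j \<inter> D (Suc j)) \<omega> * ennreal (Y d (real (Suc j) * h) \<omega>)) \<in> borel_measurable (completion M)"
      using mJ by measurable
    have "(\<integral>\<^sup>+\<omega>. R \<omega> \<partial>completion M) = T0 + (\<integral>\<^sup>+\<omega>. (\<Sum>j. ennreal d * (indicator (E j) \<omega> * Iw j \<omega>) + indicator (E j \<inter> D (Suc j)) \<omega> * ennreal (Y d (real (Suc j) * h) \<omega>)) \<partial>completion M)"
      unfolding R_def T0_def by (rule nn_integral_add[OF mT ms])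
    also have "(\<integral>\<^sup>+\<omega>. (\<Sum>j. ennreal d * (indicator (E j) \<omega> * Iw j \<omega>) + indicator (E j \<inter> D (Suc j)) \<omega> * ennreal (Y d (real (Suc j) * h) \<omega>)) \<partial>completion M)
       = (\<Sum>j. (\<integral>\<^sup>+\<omega>. ennreal d * (indicator (E j) \<omega> * Iw j \<omega>) + indicator (E j \<inter> D (Suc j)) \<omega> * ennreal (Y d (real (Suc j) * h) \<omega>) \<partial>completion M))"
      by (rule nn_integral_suminf[OF mJ])
    also have "\<dots> = (\<Sum>j. ennreal d * J j + Tm j)"
    proof (intro suminf_cong)
      fix j
      have mI: "(\<lambda>\<omega>. indicator (E j) \<omega> * Iw j \<omega>) \<in> borel_measurable (completion M)"
        using sets_C(2)[of j] by measurable
      show "(\<integral>\<^sup>+\<omega>. ennreal d * (indicator (E j) \<omega> * Iw j \<omega>) + indicator (E j \<inter> D (Suc j)) \<omega> * ennreal (Y d (real (Suc j) * h) \<omega>) \<partial>completion M)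
          = ennreal d * J j + Tm j"
        unfolding J_def Tm_def nn_integral_add[OF mE mS] nn_integral_cmult[OF mI] ..
    qed
    finally show ?thesis .
  qed
  also have "\<dots> \<le> 1"
  proof -
    have "(\<Sum>j. ennreal d * J j + Tm j) + T0 \<le> 1"
    proof (rule ennreal_suminf_bound_add)
      fix N
      have "(\<Sum>j<N. ennreal d * J j + Tm j) + T0 \<le> T0 + (\<Sum>j<N. ennreal d * J j + Tm j) + q N"
        by (simp add: add_ac)
      then show "(\<Sum>j<N. ennreal d * J j + Tm j) + T0 \<le> 1" using telescope[of N] by simp
    qed
    then show ?thesis by (simp add: add_ac)
  qed
  finally show ?thesis .
qed

lemma mR[measurable]: "R \<in> borel_measurable (completion M)"
proof -
  have ms: "(\<lambda>\<omega>. \<Sum>j. ennreal d * (indicator (E j) \<omega> * Iw j \<omega>) + indicator (E j \<inter> D (Suc j)) \<omega> * ennreal (Y d (real (Suc j) * h) \<omega>)) \<in> borel_measurable (completion M)"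
    using mJ by measurable
  show ?thesis unfolding R_def[abs_def] using mT ms by (rule borel_measurable_add)
qed

lemma pointwise:
  assumes \<omega>: "\<omega> \<in> space M"
  shows "ennreal d * (\<integral>\<^sup>+t. indicator {t. 0 \<le> t \<and> ennreal t < \<tau> \<omega>} t * ennreal (Yp d t \<omega>) \<partial>lborel)
     + (if \<tau> \<omega> = \<top> then 0 else ennreal (Y d (real (nat \<lceil>enn2real (\<tau> \<omega>) / h\<rceil>) * h) \<omega>)) \<le> R \<omega>"
proof -
  have Ym[measurable]: "(\<lambda>t. Yp d t \<omega>) \<in> borel_measurable borel" using Yp_sec[OF \<omega>] .
  define a where "a j = indicator (E j) \<omega> * Iw j \<omega>" for j
  define b where "b j = indicator (E j \<inter> D (Suc j)) \<omega> * ennreal (Y d (real (Suc j) * h) \<omega>)" for j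
  have R_eq: "R \<omega> = ennreal d * (\<Sum>j. a j) + (indicator (D 0) \<omega> * ennreal (Y d 0 \<omega>) + (\<Sum>j. b j))"
  proof -
    have "(\<Sum>j. ennreal d * a j + b j) = (\<Sum>j. ennreal d * a j) + (\<Sum>j. b j)"
      by (rule suminf_add[symmetric]) auto
    then show ?thesis unfolding R_def a_def b_def by (simp add: add_ac)
  qed
  have P1: "(\<integral>\<^sup>+t. indicator {t. 0 \<le> t \<and> ennreal t < \<tau> \<omega>} t * ennreal (Yp d t \<omega>) \<partial>lborel) \<le> (\<Sum>j. a j)"
  proof -
    have "(\<Sum>j. a j) = (\<Sum>j. \<integral>\<^sup>+t. indicator (E j) \<omega> * (indicator {real j * h .. real j * h + h} t * ennreal (Yp d t \<omega>)) \<partial>lborel)"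
      unfolding a_def Iw_def by (intro suminf_cong nn_integral_cmult[symmetric]) measurable
    also have "\<dots> = (\<integral>\<^sup>+t. (\<Sum>j. indicator (E j) \<omega> * (indicator {real j * h .. real j * h + h} t * ennreal (Yp d t \<omega>))) \<partial>lborel)"
      by (rule nn_integral_suminf[symmetric]) measurable
    finally have eq: "(\<Sum>j. a j) = \<dots>" .
    show ?thesis unfolding eq
    proof (rule nn_integral_mono)
      fix t :: real
      show "indicator {t. 0 \<le> t \<and> ennreal t < \<tau> \<omega>} t * ennreal (Yp d t \<omega>)
          \<le> (\<Sum>j. indicator (E j) \<omega> * (indicator {real j * h .. real j * h + h} t * ennreal (Yp d t \<omega>)))"
      proof (cases "0 \<le> t \<and> ennreal t < \<tau> \<omega>")
        case True
        define j where "j = nat \<lfloor>t / h\<rfloor>"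
        have t0: "0 \<le> t" and tt: "ennreal t < \<tau> \<omega>" using True by auto
        have jle: "real j * h \<le> t"
        proof -
          have "real j = real_of_int \<lfloor>t / h\<rfloor>" using t0 h by (simp add: j_def)
          also have "\<dots> \<le> t / h" by simp
          finally show ?thesis using h by (simp add: field_simps)
        qed
        have jge: "t \<le> real j * h + h"
        proof -
          have "t / h \<le> real_of_int \<lfloor>t / h\<rfloor> + 1" by linarith
          also have "real_of_int \<lfloor>t / h\<rfloor> = real j" using t0 h by (simp add: j_def)
          finally show ?thesis using h by (simp add: field_simps)
        qed
        have jnn: "0 \<le> real j * h" using h by simp
        have "\<not> \<tau> \<omega> \<le> ennreal (real j * h)"
        proof
          assume "\<tau> \<omega> \<le> ennreal (real j * h)"
          moreover have "ennreal (real j * h) \<le> ennreal t" using jle by (rule ennreal_leI)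
          ultimately show False using tt by simp
        qed
        then have "\<omega> \<in> E j" using \<omega> by (simp add: E_def D_def)
        then have "indicator {t. 0 \<le> t \<and> ennreal t < \<tau> \<omega>} t * ennreal (Yp d t \<omega>)
             = (\<Sum>i\<in>{j}. indicator (E i) \<omega> * (indicator {real i * h .. real i * h + h} t * ennreal (Yp d t \<omega>)))"
          using True jle jge by simp
        also have "\<dots> \<le> (\<Sum>i. indicator (E i) \<omega> * (indicator {real i * h .. real i * h + h} t * ennreal (Yp d t \<omega>)))"
          by (rule sum_le_suminf) auto
        finally show ?thesis .
      qed simp
    qed
  qed
  have P2: "(if \<tau> \<omega> = \<top> then 0 else ennreal (Y d (real (nat \<lceil>enn2real (\<tau> \<omega>) / h\<rceil>) * h) \<omega>))
      \<le> indicator (D 0) \<omega> * ennreal (Y d 0 \<omega>) + (\<Sum>j. b j)"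
  proof (cases "\<tau> \<omega> = \<top>")
    case False
    define T where "T = enn2real (\<tau> \<omega>)"
    have T0: "0 \<le> T" by (simp add: T_def)
    have tauT: "\<tau> \<omega> = ennreal T" using False by (simp add: T_def ennreal_enn2real_if)
    define k where "k = nat \<lceil>T / h\<rceil>"
    show ?thesis
    proof (cases k)
      case 0
      then have "\<lceil>T / h\<rceil> \<le> 0" by (simp add: k_def)
      then have "T / h \<le> 0" by linarith
      then have "T = 0" using T0 h by (simp add: divide_le_0_iff)
      then have "\<omega> \<in> D 0" using \<omega> tauT by (simp add: D_def)
      then show ?thesis using False 0 by (simp add: k_def[symmetric] T_def[symmetric])
    next
      case (Suc j)
      then have c: "\<lceil>T / h\<rceil> = int j + 1" by (simp add: k_def)
      then have "real j < T / h" "T / h \<le> real j + 1" by linarith+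
      then have lt: "real j * h < T" and le: "T \<le> real (Suc j) * h" using h by (simp_all add: field_simps)
      have "\<not> \<tau> \<omega> \<le> ennreal (real j * h)" using lt tauT T0 h by (simp add: ennreal_le_iff2 ennreal_le_iff) (smt (verit, ccfv_SIG) mult_nonneg_nonneg of_nat_0_le_iff)
      moreover have "\<tau> \<omega> \<le> ennreal (real (Suc j) * h)" using le tauT by (simp add: ennreal_leI)
      ultimately have mem: "\<omega> \<in> E j \<inter> D (Suc j)" using \<omega> by (simp add: E_def D_def)
      have "(if \<tau> \<omega> = \<top> then 0 else ennreal (Y d (real (nat \<lceil>enn2real (\<tau> \<omega>) / h\<rceil>) * h) \<omega>)) = b j"
        using False mem Suc by (simp add: b_def k_def[symmetric] T_def[symmetric])
      also have "\<dots> = (\<Sum>i\<in>{j}. b i)" by simp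
      also have "\<dots> \<le> (\<Sum>i. b i)" by (rule sum_le_suminf) auto
      also have "\<dots> \<le> indicator (D 0) \<omega> * ennreal (Y d 0 \<omega>) + (\<Sum>j. b j)" by simp
      finally show ?thesis .
    qed
  qed simp
  show ?thesis unfolding R_eq using P1 P2 by (intro add_mono mult_left_mono) auto
qed

end
end


lemma exp_half_line:
  fixes d :: real assumes d: "d > 0"
  shows "(\<integral>\<^sup>+t. indicator {0..} t * ennreal (exp (-d * t)) \<partial>lborel) = ennreal (1 / d)"
proof -
  interpret P: prob_space "density lborel (exponential_density d)" by (rule prob_space_exponential_density[OF d])
  have "(\<integral>\<^sup>+t. ennreal (exponential_density d t) \<partial>lborel) = 1"
    using P.emeasure_space_1 by (simp add: emeasure_density)
  moreover have "(\<integral>\<^sup>+t. ennreal (exponential_density d t) \<partial>lborel)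
      = ennreal d * (\<integral>\<^sup>+t. indicator {0..} t * ennreal (exp (-d * t)) \<partial>lborel)"
  proof -
    have "(\<integral>\<^sup>+t. ennreal (exponential_density d t) \<partial>lborel)
        = (\<integral>\<^sup>+t. ennreal d * (indicator {0..} t * ennreal (exp (-d * t))) \<partial>lborel)"
      using d by (intro nn_integral_cong) (auto simp: exponential_density_def indicator_def ennreal_mult mult.commute)
    also have "\<dots> = ennreal d * (\<integral>\<^sup>+t. indicator {0..} t * ennreal (exp (-d * t)) \<partial>lborel)"
      by (rule nn_integral_cmult) measurable
    finally show ?thesis .
  qed
  ultimately have e: "ennreal d * (\<integral>\<^sup>+t. indicator {0..} t * ennreal (exp (-d * t)) \<partial>lborel) = 1" by simp
  have "(\<integral>\<^sup>+t. indicator {0..} t * ennreal (exp (-d * t)) \<partial>lborel)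
      = ennreal (1 / d) * (ennreal d * (\<integral>\<^sup>+t. indicator {0..} t * ennreal (exp (-d * t)) \<partial>lborel))"
    using d by (simp add: mult.assoc[symmetric] ennreal_mult[symmetric])
  then show ?thesis using e by simp
qed

lemma ceil_grid:
  fixes T h :: real assumes T: "0 \<le> T" and h: "0 < h"
  shows "T \<le> real (nat \<lceil>T / h\<rceil>) * h" "real (nat \<lceil>T / h\<rceil>) * h \<le> T + h"
proof -
  have e: "real (nat \<lceil>T / h\<rceil>) = real_of_int \<lceil>T / h\<rceil>" using T h by simp
  have "T = T / h * h" using h by simp
  also have "\<dots> \<le> real_of_int \<lceil>T / h\<rceil> * h" by (rule mult_right_mono) (use h in auto)
  finally show "T \<le> real (nat \<lceil>T / h\<rceil>) * h" unfolding e .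
  have "real_of_int \<lceil>T / h\<rceil> * h \<le> (T / h + 1) * h" by (rule mult_right_mono) (use h in linarith, use h in auto)
  also have "\<dots> = T + h" using h by (simp add: field_simps)
  finally show "real (nat \<lceil>T / h\<rceil>) * h \<le> T + h" unfolding e .
qed

context bmctx begin

lemma upper:
  assumes d: "d > 0" and a: "0 \<le> a" and f: "0 \<le> f" and tau: "\<tau> \<in> stopping_times_B M B"
  shows "(\<integral>\<^sup>+\<omega>. (\<integral>\<^sup>+t. indicator {t. 0 \<le> t \<and> ennreal t < \<tau> \<omega>} t * ennreal (a * Y d t \<omega>) \<partial>lborel)
             + (if \<tau> \<omega> = \<top> then 0 else ennreal (f * Y d (enn2real (\<tau> \<omega>)) \<omega>)) \<partial>completion M)
         \<le> ennreal (max (a / d) f)"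
proof -
  define c where "c = max (a / d) f"
  have c0: "0 \<le> c" using f by (simp add: c_def)
  have acd: "a \<le> c * d"
  proof -
    have "a = a / d * d" using d by simp
    also have "\<dots> \<le> c * d" by (rule mult_right_mono) (use d in \<open>auto simp: c_def\<close>)
    finally show ?thesis .
  qed
  have fc: "f \<le> c" by (simp add: c_def)
  define hh where "hh n = 1 / real (Suc n)" for n
  have hh: "0 < hh n" for n by (simp add: hh_def)
  define P1 where "P1 \<omega> = (\<integral>\<^sup>+t. indicator {t. 0 \<le> t \<and> ennreal t < \<tau> \<omega>} t * ennreal (Yp d t \<omega>) \<partial>lborel)" for \<omega>
  define tm where "tm \<omega> = (if \<tau> \<omega> = \<top> then 0 else ennreal (Y d (enn2real (\<tau> \<omega>)) \<omega>))" for \<omega>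
  define tmn where "tmn n \<omega> = (if \<tau> \<omega> = \<top> then 0 else ennreal (Y d (real (nat \<lceil>enn2real (\<tau> \<omega>) / hh n\<rceil>) * hh n) \<omega>))" for n \<omega>
  have step1: "(\<integral>\<^sup>+t. indicator {t. 0 \<le> t \<and> ennreal t < \<tau> \<omega>} t * ennreal (a * Y d t \<omega>) \<partial>lborel)
             + (if \<tau> \<omega> = \<top> then 0 else ennreal (f * Y d (enn2real (\<tau> \<omega>)) \<omega>))
      \<le> ennreal c * (ennreal d * P1 \<omega> + tm \<omega>)" if \<omega>: "\<omega> \<in> space M" for \<omega>
  proof -
    have Ym[measurable]: "(\<lambda>t. Yp d t \<omega>) \<in> borel_measurable borel" using Yp_sec[OF \<omega>] .
    have "(\<integral>\<^sup>+t. indicator {t. 0 \<le> t \<and> ennreal t < \<tau> \<omega>} t * ennreal (a * Y d t \<omega>) \<partial>lborel)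
        \<le> (\<integral>\<^sup>+t. ennreal (c * d) * (indicator {t. 0 \<le> t \<and> ennreal t < \<tau> \<omega>} t * ennreal (Yp d t \<omega>)) \<partial>lborel)"
    proof (rule nn_integral_mono)
      fix t :: real
      have "ennreal (a * Y d t \<omega>) \<le> ennreal (c * d * Y d t \<omega>)"
        using acd Y_pos[of d t \<omega>] by (intro ennreal_leI mult_right_mono) auto
      then show "indicator {t. 0 \<le> t \<and> ennreal t < \<tau> \<omega>} t * ennreal (a * Y d t \<omega>)
          \<le> ennreal (c * d) * (indicator {t. 0 \<le> t \<and> ennreal t < \<tau> \<omega>} t * ennreal (Yp d t \<omega>))"
        using c0 d Y_pos[of d t \<omega>] by (auto simp: indicator_def Yp_def ennreal_mult[symmetric])
    qed
    also have "\<dots> = ennreal (c * d) * P1 \<omega>"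
      unfolding P1_def by (rule nn_integral_cmult) measurable
    finally have i1: "(\<integral>\<^sup>+t. indicator {t. 0 \<le> t \<and> ennreal t < \<tau> \<omega>} t * ennreal (a * Y d t \<omega>) \<partial>lborel) \<le> ennreal (c * d) * P1 \<omega>" .
    have i2: "(if \<tau> \<omega> = \<top> then 0 else ennreal (f * Y d (enn2real (\<tau> \<omega>)) \<omega>)) \<le> ennreal c * tm \<omega>"
      using fc Y_pos[of d "enn2real (\<tau> \<omega>)" \<omega>] c0
      by (auto simp: tm_def ennreal_mult[symmetric] intro!: ennreal_leI mult_right_mono)
    have "ennreal (c * d) * P1 \<omega> + ennreal c * tm \<omega> = ennreal c * (ennreal d * P1 \<omega> + tm \<omega>)"
      using c0 d by (simp add: ennreal_mult distrib_left mult.assoc)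
    then show ?thesis using add_mono[OF i1 i2] by simp
  qed
  have step2: "ennreal d * P1 \<omega> + tm \<omega> \<le> liminf (\<lambda>n. R \<tau> (hh n) d \<omega>)" if \<omega>: "\<omega> \<in> space M" for \<omega>
  proof -
    have lim: "(\<lambda>n. ennreal d * P1 \<omega> + tmn n \<omega>) \<longlonglongrightarrow> ennreal d * P1 \<omega> + tm \<omega>"
    proof (intro tendsto_add tendsto_const)
      show "(\<lambda>n. tmn n \<omega>) \<longlonglongrightarrow> tm \<omega>"
      proof (cases "\<tau> \<omega> = \<top>")
        case True then show ?thesis by (simp add: tmn_def tm_def)
      next
        case False
        define T where "T = enn2real (\<tau> \<omega>)"
        have T0: "0 \<le> T" by (simp add: T_def)
        define qn where "qn n = real (nat \<lceil>T / hh n\<rceil>) * hh n" for n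
        have "qn \<longlonglongrightarrow> T"
        proof (rule tendsto_sandwich[where f="\<lambda>n. T" and h="\<lambda>n. T + hh n"])
          show "\<forall>\<^sub>F n in sequentially. T \<le> qn n" using ceil_grid(1)[OF T0 hh] by (simp add: qn_def)
          show "\<forall>\<^sub>F n in sequentially. qn n \<le> T + hh n" using ceil_grid(2)[OF T0 hh] by (simp add: qn_def)
          have "hh \<longlonglongrightarrow> 0" unfolding hh_def by (rule LIMSEQ_inverse_real_of_nat[unfolded inverse_eq_divide])
          then show "(\<lambda>n. T + hh n) \<longlonglongrightarrow> T" using tendsto_add[OF tendsto_const[of T]] by fastforce
        qed simp
        then have "(\<lambda>n. Y d (qn n) \<omega>) \<longlonglongrightarrow> Y d T \<omega>"
          by (rule Y_tendsto[OF \<omega> T0]) (use hh in \<open>simp add: qn_def less_imp_le\<close>)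
        then have "(\<lambda>n. ennreal (Y d (qn n) \<omega>)) \<longlonglongrightarrow> ennreal (Y d T \<omega>)" by (rule tendsto_ennrealI)
        then show ?thesis using False by (simp add: tmn_def tm_def qn_def T_def)
      qed
    qed
    have "ennreal d * P1 \<omega> + tm \<omega> = liminf (\<lambda>n. ennreal d * P1 \<omega> + tmn n \<omega>)"
      using lim_imp_Liminf[OF _ lim] by simp
    also have "\<dots> \<le> liminf (\<lambda>n. R \<tau> (hh n) d \<omega>)"
    proof (intro Liminf_mono always_eventually allI)
      fix n
      have "ennreal d * P1 \<omega> + tmn n \<omega> = ennreal d * (\<integral>\<^sup>+t. indicator {t. 0 \<le> t \<and> ennreal t < \<tau> \<omega>} t * ennreal (Yp d t \<omega>) \<partial>lborel)
     + (if \<tau> \<omega> = \<top> then 0 else ennreal (Y d (real (nat \<lceil>enn2real (\<tau> \<omega>) / hh n\<rceil>) * hh n) \<omega>))"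
        by (simp add: P1_def tmn_def)
      also have "\<dots> \<le> R \<tau> (hh n) d \<omega>" by (rule pointwise[OF tau hh d \<omega>])
      finally show "ennreal d * P1 \<omega> + tmn n \<omega> \<le> R \<tau> (hh n) d \<omega>" .
    qed
    finally show ?thesis .
  qed
  have mRn: "(\<lambda>\<omega>. R \<tau> (hh n) d \<omega>) \<in> borel_measurable (completion M)" for n
    using mR[OF tau hh d] by simp
  have "(\<integral>\<^sup>+\<omega>. (\<integral>\<^sup>+t. indicator {t. 0 \<le> t \<and> ennreal t < \<tau> \<omega>} t * ennreal (a * Y d t \<omega>) \<partial>lborel)
             + (if \<tau> \<omega> = \<top> then 0 else ennreal (f * Y d (enn2real (\<tau> \<omega>)) \<omega>)) \<partial>completion M)
      \<le> (\<integral>\<^sup>+\<omega>. ennreal c * liminf (\<lambda>n. R \<tau> (hh n) d \<omega>) \<partial>completion M)"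
  proof (rule nn_integral_mono)
    fix \<omega> assume "\<omega> \<in> space (completion M)"
    then have \<omega>: "\<omega> \<in> space M" by simp
    show "(\<integral>\<^sup>+t. indicator {t. 0 \<le> t \<and> ennreal t < \<tau> \<omega>} t * ennreal (a * Y d t \<omega>) \<partial>lborel)
             + (if \<tau> \<omega> = \<top> then 0 else ennreal (f * Y d (enn2real (\<tau> \<omega>)) \<omega>))
       \<le> ennreal c * liminf (\<lambda>n. R \<tau> (hh n) d \<omega>)"
      using step1[OF \<omega>] mult_left_mono[OF step2[OF \<omega>], of "ennreal c"] by (auto intro: order_trans)
  qed
  also have "\<dots> = ennreal c * (\<integral>\<^sup>+\<omega>. liminf (\<lambda>n. R \<tau> (hh n) d \<omega>) \<partial>completion M)"
    by (rule nn_integral_cmult) (use mRn in measurable)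
  also have "\<dots> \<le> ennreal c * liminf (\<lambda>n. \<integral>\<^sup>+\<omega>. R \<tau> (hh n) d \<omega> \<partial>completion M)"
    by (intro mult_left_mono nn_integral_liminf mRn) simp
  also have "\<dots> \<le> ennreal c * 1"
  proof (intro mult_left_mono)
    have "liminf (\<lambda>n. \<integral>\<^sup>+\<omega>. R \<tau> (hh n) d \<omega> \<partial>completion M) \<le> limsup (\<lambda>n. \<integral>\<^sup>+\<omega>. R \<tau> (hh n) d \<omega> \<partial>completion M)"
      by (rule Liminf_le_Limsup) simp
    also have "\<dots> \<le> 1"
      by (intro Limsup_bounded always_eventually allI ER_le[OF tau hh d])
    finally show "liminf (\<lambda>n. \<integral>\<^sup>+\<omega>. R \<tau> (hh n) d \<omega> \<partial>completion M) \<le> 1" .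
  qed simp
  finally show ?thesis by (simp add: c_def)
qed

end


context bmctx begin

lemma tau0_st: "(\<lambda>_. 0) \<in> stopping_times_B M B"
  unfolding stopping_times_B_def using aug_space by simp

lemma tauInf_st: "(\<lambda>_. \<top>) \<in> stopping_times_B M B"
proof -
  have e: "{\<omega> \<in> space M. \<top> \<le> ennreal t} = {}" for t by (auto simp: top_unique)
  show ?thesis unfolding stopping_times_B_def augmented_filtration_def by (simp add: top_unique sigma_sets.Empty)
qed

lemma lower0:
  assumes f: "0 \<le> f"
  shows "(\<integral>\<^sup>+\<omega>. (\<integral>\<^sup>+t. indicator {t. 0 \<le> t \<and> ennreal t < (\<lambda>_. 0::ennreal) \<omega>} t * ennreal (a * Y d t \<omega>) \<partial>lborel)
             + (if (\<lambda>_. 0::ennreal) \<omega> = \<top> then 0 else ennreal (f * Y d (enn2real ((\<lambda>_. 0::ennreal) \<omega>)) \<omega>)) \<partial>completion M)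
         = ennreal f"
proof -
  interpret C: prob_space "completion M" by (rule prob_completion)
  have "(\<integral>\<^sup>+\<omega>. (\<integral>\<^sup>+t. indicator {t. 0 \<le> t \<and> ennreal t < (\<lambda>_. 0::ennreal) \<omega>} t * ennreal (a * Y d t \<omega>) \<partial>lborel)
             + (if (\<lambda>_. 0::ennreal) \<omega> = \<top> then 0 else ennreal (f * Y d (enn2real ((\<lambda>_. 0::ennreal) \<omega>)) \<omega>)) \<partial>completion M)
      = (\<integral>\<^sup>+\<omega>. ennreal f \<partial>completion M)"
    by (intro nn_integral_cong) (simp add: Y0)
  also have "\<dots> = ennreal f" using C.emeasure_space_1 by simp
  finally show ?thesis .
qed

lemma lowerInf:
  assumes d: "0 < d" and a: "0 \<le> a"
  shows "(\<integral>\<^sup>+\<omega>. (\<integral>\<^sup>+t. indicator {t. 0 \<le> t \<and> ennreal t < (\<lambda>_. \<top>::ennreal) \<omega>} t * ennreal (a * Y d t \<omega>) \<partial>lborel)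
             + (if (\<lambda>_. \<top>::ennreal) \<omega> = \<top> then 0 else ennreal (f * Y d (enn2real ((\<lambda>_. \<top>::ennreal) \<omega>)) \<omega>)) \<partial>completion M)
         = ennreal (a / d)"
proof -
  interpret P: pair_sigma_finite "completion M" lborel
    using sf_completion by (simp add: pair_sigma_finite_def lborel.sigma_finite_measure_axioms)
  have J[measurable]: "(\<lambda>x. Yp d (snd x) (fst x)) \<in> borel_measurable (completion M \<Otimes>\<^sub>M lborel)"
    by (rule Yp_joint)
  have "(\<integral>\<^sup>+\<omega>. (\<integral>\<^sup>+t. indicator {t. 0 \<le> t \<and> ennreal t < (\<lambda>_. \<top>::ennreal) \<omega>} t * ennreal (a * Y d t \<omega>) \<partial>lborel)
             + (if (\<lambda>_. \<top>::ennreal) \<omega> = \<top> then 0 else ennreal (f * Y d (enn2real ((\<lambda>_. \<top>::ennreal) \<omega>)) \<omega>)) \<partial>completion M)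
      = (\<integral>\<^sup>+\<omega>. (\<integral>\<^sup>+t. ennreal a * ennreal (Yp d t \<omega>) \<partial>lborel) \<partial>completion M)"
    using a by (intro nn_integral_cong) (simp, intro nn_integral_cong, auto simp: indicator_def Yp_def ennreal_mult Y_pos less_imp_le)
  also have "\<dots> = (\<integral>\<^sup>+t. (\<integral>\<^sup>+\<omega>. ennreal a * ennreal (Yp d t \<omega>) \<partial>completion M) \<partial>lborel)"
    by (rule P.Fubini'[symmetric]) measurable
  also have "\<dots> = (\<integral>\<^sup>+t. ennreal a * (indicator {0..} t * ennreal (exp (-d * t))) \<partial>lborel)"
  proof (rule nn_integral_cong)
    fix t :: real
    show "(\<integral>\<^sup>+\<omega>. ennreal a * ennreal (Yp d t \<omega>) \<partial>completion M) = ennreal a * (indicator {0..} t * ennreal (exp (-d * t)))"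
    proof (cases "0 \<le> t")
      case True
      have "(\<integral>\<^sup>+\<omega>. ennreal a * ennreal (Yp d t \<omega>) \<partial>completion M) = ennreal a * (\<integral>\<^sup>+\<omega>. indicator (space M) \<omega> * ennreal (Y d t \<omega>) \<partial>completion M)"
      proof -
        have "(\<integral>\<^sup>+\<omega>. ennreal a * ennreal (Yp d t \<omega>) \<partial>completion M) = (\<integral>\<^sup>+\<omega>. ennreal a * (indicator (space M) \<omega> * ennreal (Y d t \<omega>)) \<partial>completion M)"
          using True by (intro nn_integral_cong) (simp add: Yp_def)
        also have "\<dots> = ennreal a * (\<integral>\<^sup>+\<omega>. indicator (space M) \<omega> * ennreal (Y d t \<omega>) \<partial>completion M)"
        proof (rule nn_integral_cmult)
          have mY: "(\<lambda>\<omega>. ennreal (Y d t \<omega>)) \<in> borel_measurable (completion M)"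
            using YC[of d t] measurable_ennreal by (rule measurable_compose)
          have "space M \<in> sets (completion M)" by simp
          then show "(\<lambda>\<omega>. indicator (space M) \<omega> * ennreal (Y d t \<omega>)) \<in> borel_measurable (completion M)"
            by (rule borel_measurable_times_ennreal[OF borel_measurable_indicator mY])
        qed
        finally show ?thesis .
      qed
      also have "(\<integral>\<^sup>+\<omega>. indicator (space M) \<omega> * ennreal (Y d t \<omega>) \<partial>completion M)
          = (\<integral>\<^sup>+\<omega>. indicator (space M) \<omega> * ennreal (Y d 0 \<omega>) \<partial>completion M) * ennreal (exp (-d * (t - 0)))"
        by (rule key) (use True aug_space in auto)
      also have "(\<integral>\<^sup>+\<omega>. indicator (space M) \<omega> * ennreal (Y d 0 \<omega>) \<partial>completion M) = 1"
      proof -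
        have "(\<integral>\<^sup>+\<omega>. indicator (space M) \<omega> * ennreal (Y d 0 \<omega>) \<partial>completion M) = (\<integral>\<^sup>+\<omega>. ennreal (Y d 0 \<omega>) \<partial>completion M)"
          by (intro nn_integral_cong) simp
        then show ?thesis using EY0[of d] by simp
      qed
      finally show ?thesis using True by simp
    qed (simp add: Yp_def)
  qed
  also have "\<dots> = ennreal a * (\<integral>\<^sup>+t. indicator {0..} t * ennreal (exp (-d * t)) \<partial>lborel)"
    by (rule nn_integral_cmult) measurable
  also have "\<dots> = ennreal a * ennreal (1 / d)" by (simp only: exp_half_line[OF d])
  also have "\<dots> = ennreal (a / d)" using a d by (subst ennreal_mult[symmetric]) auto
  finally show ?thesis .
qed

end


theorem lemma4p5:
  fixes M :: "'a measure" and B :: "real \<Rightarrow> 'a \<Rightarrow> real"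
    and \<theta> \<alpha> \<sigma> \<rho> \<nu> \<rho>h \<mu>m \<mu>M \<mu>h \<mu> :: real
  assumes BM: "std_brownian_motion M B"
    and "\<theta> > 0" and "\<alpha> \<ge> 0" and "\<sigma> > 0" and "\<rho> > 0" and "0 \<le> \<nu>" and "\<nu> \<le> 1"
    and "\<rho>h > 0" and "0 < \<mu>m" and "\<mu>m \<le> \<mu>M" and "\<mu>m \<le> \<mu>h" and "\<mu>h \<le> \<mu>M"
    and "\<theta> - \<alpha> - \<rho> - \<mu>m < 0"
    and "\<mu>m \<le> \<mu>" and "\<mu> \<le> \<mu>M"
  shows "(SUP \<tau>\<in>stopping_times_B M B.
            \<integral>\<^sup>+ \<omega>. reward (\<lambda>t \<omega>. exp ((\<theta> - \<alpha> - \<sigma>\<^sup>2 / 2) * t + \<sigma> * B t \<omega>))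
                        (\<rho> + \<mu>) (\<alpha> + \<nu> * \<mu>) (fhat \<rho>h \<mu>h \<rho> \<mu>) \<tau> \<omega> \<partial>completion M)
         = ennreal (max (betaN \<alpha> \<nu> \<rho> \<theta> \<mu>) (fhat \<rho>h \<mu>h \<rho> \<mu>))"
proof -
  interpret bmctx M B \<sigma> by unfold_locales (use BM \<open>\<sigma> > 0\<close> in auto)
  define d where "d = \<rho> + \<mu> + \<alpha> - \<theta>"
  define a where "a = \<alpha> + \<nu> * \<mu>"
  define f where "f = fhat \<rho>h \<mu>h \<rho> \<mu>"
  have d: "d > 0" using assms by (simp add: d_def)
  have a: "0 \<le> a" using assms by (simp add: a_def)
  have f: "0 \<le> f" using assms by (simp add: f_def fhat_def)
  have beta: "betaN \<alpha> \<nu> \<rho> \<theta> \<mu> = a / d" by (simp add: betaN_def a_def d_def)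
  define G where "G \<tau> \<omega> = (\<integral>\<^sup>+t. indicator {t. 0 \<le> t \<and> ennreal t < \<tau> \<omega>} t * ennreal (a * Y d t \<omega>) \<partial>lborel)
             + (if \<tau> \<omega> = \<top> then 0 else ennreal (f * Y d (enn2real (\<tau> \<omega>)) \<omega>))" for \<tau> :: "'a \<Rightarrow> ennreal" and \<omega>
  have XY: "exp (- (\<rho> + \<mu>) * t) * c * exp ((\<theta> - \<alpha> - \<sigma>\<^sup>2 / 2) * t + \<sigma> * B t \<omega>) = c * Y d t \<omega>" for t c \<omega>
  proof -
    have "- (\<rho> + \<mu>) * t + ((\<theta> - \<alpha> - \<sigma>\<^sup>2 / 2) * t + \<sigma> * B t \<omega>) = -(d + \<sigma>\<^sup>2/2) * t + \<sigma> * B t \<omega>"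
      by (simp add: d_def algebra_simps)
    then have "exp (- (\<rho> + \<mu>) * t) * exp ((\<theta> - \<alpha> - \<sigma>\<^sup>2 / 2) * t + \<sigma> * B t \<omega>) = Y d t \<omega>"
      by (simp add: Y_def exp_add[symmetric])
    then show ?thesis by (metis mult.assoc mult.commute)
  qed
  have RG: "reward (\<lambda>t \<omega>. exp ((\<theta> - \<alpha> - \<sigma>\<^sup>2 / 2) * t + \<sigma> * B t \<omega>))
                        (\<rho> + \<mu>) (\<alpha> + \<nu> * \<mu>) (fhat \<rho>h \<mu>h \<rho> \<mu>) \<tau> \<omega> = G \<tau> \<omega>" for \<tau> \<omega>
    unfolding reward_def G_def a_def[symmetric] f_def[symmetric] XY ..
  have "(SUP \<tau>\<in>stopping_times_B M B.
            \<integral>\<^sup>+ \<omega>. reward (\<lambda>t \<omega>. exp ((\<theta> - \<alpha> - \<sigma>\<^sup>2 / 2) * t + \<sigma> * B t \<omega>))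
                        (\<rho> + \<mu>) (\<alpha> + \<nu> * \<mu>) (fhat \<rho>h \<mu>h \<rho> \<mu>) \<tau> \<omega> \<partial>completion M)
       = (SUP \<tau>\<in>stopping_times_B M B. \<integral>\<^sup>+ \<omega>. G \<tau> \<omega> \<partial>completion M)"
    unfolding RG ..
  also have "\<dots> = ennreal (max (a / d) f)"
  proof (rule antisym)
    show "(SUP \<tau>\<in>stopping_times_B M B. \<integral>\<^sup>+ \<omega>. G \<tau> \<omega> \<partial>completion M) \<le> ennreal (max (a / d) f)"
    proof (rule SUP_least)
      fix \<tau> assume "\<tau> \<in> stopping_times_B M B"
      then show "(\<integral>\<^sup>+ \<omega>. G \<tau> \<omega> \<partial>completion M) \<le> ennreal (max (a / d) f)"
        unfolding G_def by (rule upper[OF d a f])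
    qed
    have l1: "ennreal f \<le> (SUP \<tau>\<in>stopping_times_B M B. \<integral>\<^sup>+ \<omega>. G \<tau> \<omega> \<partial>completion M)"
      by (rule SUP_upper2[OF tau0_st]) (simp only: G_def lower0[OF f] order_refl)
    have l2: "ennreal (a / d) \<le> (SUP \<tau>\<in>stopping_times_B M B. \<integral>\<^sup>+ \<omega>. G \<tau> \<omega> \<partial>completion M)"
      by (rule SUP_upper2[OF tauInf_st]) (simp only: G_def lowerInf[OF d a] order_refl)
    show "ennreal (max (a / d) f) \<le> (SUP \<tau>\<in>stopping_times_B M B. \<integral>\<^sup>+ \<omega>. G \<tau> \<omega> \<partial>completion M)"
      using l1 l2 by (cases "a / d \<le> f") (simp_all add: max_def)
  qed
  finally show ?thesis by (simp add: beta f_def)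
qed


end
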